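(* Let $\mathcal{L}$ be the Lie algebra over $\mathbb{C}$ with basis $\{D(s):s\in\mathbb{Z}\}$ and bracket $$[D(s),D(m)]=(m-s)D(s+m)-mD(m)+sD(s).$$ For $m\ge 0$ set $$y_m=\sum_{k=0}^{m+1}(-1)^{m+1-k}\binom{m+1}{k}D(-1+k).$$ (a) For $m\ge 0$, $[D(-1),y_m]=-m\,y_m$. (b) For $m,k\ge 0$, $[y_k,y_m]=(m-k)\,y_{m+k}$.
   Context: $y_m$ is the $(m+1)$-st iterated difference derivative $\partial^{m+1}D$ evaluated at $-1$, where $\partial f(s)=f(s+1)-f(s)$. *)

theory Defs
  imports Complex_Main "HOL-Library.Poly_Mapping"
begin

text \<open>Elements of the Lie algebra L: finitely supported coefficient functions on the basis
  D(s), s in Z, i.e. the free complex vector space with basis indexed by int.\<close>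
type_synonym LA = "int \<Rightarrow>\<^sub>0 complex"

definition D :: "int \<Rightarrow> LA" where
  "D s = Poly_Mapping.single s 1"

definition sc :: "complex \<Rightarrow> LA \<Rightarrow> LA" where
  "sc c x = Poly_Mapping.map (\<lambda>v. c * v) x"

definition brD :: "int \<Rightarrow> int \<Rightarrow> LA" where
  "brD s m = sc (of_int (m - s)) (D (s + m)) - sc (of_int m) (D m) + sc (of_int s) (D s)"

definition br :: "LA \<Rightarrow> LA \<Rightarrow> LA" where
  "br x z = (\<Sum>s\<in>Poly_Mapping.keys x. \<Sum>m\<in>Poly_Mapping.keys z. sc (Poly_Mapping.lookup x s * Poly_Mapping.lookup z m) (brD s m))"

definition y :: "nat \<Rightarrow> LA" where
  "y m = (\<Sum>k=0..m+1. sc ((-1) ^ (m + 1 - k) * of_nat ((m + 1) choose k)) (D (int k - 1)))"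

end

theory Submission imports Defs "HOL-Computational_Algebra.Polynomial"
begin

lemma lookup_sc[simp]: "Poly_Mapping.lookup (sc c x) k = c * Poly_Mapping.lookup x k"
  unfolding sc_def by (simp add: Poly_Mapping.map.rep_eq when_def)

lemma sc_add: "sc c (x + z) = sc c x + sc c z"
  by (rule poly_mapping_eqI) (simp add: lookup_add algebra_simps)
lemma sc_add_left: "sc (a + b) x = sc a x + sc b x"
  by (rule poly_mapping_eqI) (simp add: lookup_add algebra_simps)
lemma sc_mult: "sc a (sc b x) = sc (a*b) x"
  by (rule poly_mapping_eqI) (simp add: algebra_simps)
lemma sc_zero[simp]: "sc 0 x = 0" "sc c 0 = 0"
  by (rule poly_mapping_eqI, simp)+
lemma sc_one[simp]: "sc 1 x = x"
  by (rule poly_mapping_eqI, simp)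
lemma sc_minus: "sc c (x - z) = sc c x - sc c z"
  by (rule poly_mapping_eqI) (simp add: lookup_minus algebra_simps)
lemma sc_sum: "sc c (sum f A) = (\<Sum>a\<in>A. sc c (f a))"
  by (rule poly_mapping_eqI) (simp add: lookup_sum sum_distrib_left)

lemma br_sup:
  assumes "finite A" "finite B" "Poly_Mapping.keys x \<subseteq> A" "Poly_Mapping.keys z \<subseteq> B"
  shows "br x z = (\<Sum>s\<in>A. \<Sum>m\<in>B. sc (Poly_Mapping.lookup x s * Poly_Mapping.lookup z m) (brD s m))"
proof -
  have "br x z = (\<Sum>s\<in>A. \<Sum>m\<in>Poly_Mapping.keys z. sc (Poly_Mapping.lookup x s * Poly_Mapping.lookup z m) (brD s m))"
    unfolding br_def
    by (rule sum.mono_neutral_left) (use assms in \<open>auto simp: in_keys_iff\<close>)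
  also have "\<dots> = (\<Sum>s\<in>A. \<Sum>m\<in>B. sc (Poly_Mapping.lookup x s * Poly_Mapping.lookup z m) (brD s m))"
    by (rule sum.cong[OF refl], rule sum.mono_neutral_left) (use assms in \<open>auto simp: in_keys_iff\<close>)
  finally show ?thesis .
qed

lemma br_add_left: "br (x + x') z = br x z + br x' z"
proof -
  let ?A = "Poly_Mapping.keys x \<union> Poly_Mapping.keys x'"
  have f: "finite ?A" by simp
  have k: "Poly_Mapping.keys (x + x') \<subseteq> ?A" by (simp add: keys_add)
  have 1: "br (x + x') z = (\<Sum>s\<in>?A. \<Sum>m\<in>Poly_Mapping.keys z. sc (Poly_Mapping.lookup (x+x') s * Poly_Mapping.lookup z m) (brD s m))"
    by (rule br_sup[OF f _ k subset_refl]) simp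
  have 2: "br x z = (\<Sum>s\<in>?A. \<Sum>m\<in>Poly_Mapping.keys z. sc (Poly_Mapping.lookup x s * Poly_Mapping.lookup z m) (brD s m))"
    by (rule br_sup[OF f]) auto
  have 3: "br x' z = (\<Sum>s\<in>?A. \<Sum>m\<in>Poly_Mapping.keys z. sc (Poly_Mapping.lookup x' s * Poly_Mapping.lookup z m) (brD s m))"
    by (rule br_sup[OF f]) auto
  show ?thesis unfolding 1 2 3
    by (simp add: lookup_add algebra_simps sc_add_left sum.distrib[symmetric])
qed

lemma br_add_right: "br x (z + z') = br x z + br x z'"
proof -
  let ?A = "Poly_Mapping.keys z \<union> Poly_Mapping.keys z'"
  have f: "finite ?A" by simp
  have k: "Poly_Mapping.keys (z + z') \<subseteq> ?A" by (simp add: keys_add)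
  have 1: "br x (z + z') = (\<Sum>s\<in>Poly_Mapping.keys x. \<Sum>m\<in>?A. sc (Poly_Mapping.lookup x s * Poly_Mapping.lookup (z+z') m) (brD s m))"
    by (rule br_sup[OF _ f subset_refl k]) simp
  have 2: "br x z = (\<Sum>s\<in>Poly_Mapping.keys x. \<Sum>m\<in>?A. sc (Poly_Mapping.lookup x s * Poly_Mapping.lookup z m) (brD s m))"
    by (rule br_sup[OF _ f]) auto
  have 3: "br x z' = (\<Sum>s\<in>Poly_Mapping.keys x. \<Sum>m\<in>?A. sc (Poly_Mapping.lookup x s * Poly_Mapping.lookup z' m) (brD s m))"
    by (rule br_sup[OF _ f]) auto
  show ?thesis unfolding 1 2 3
    by (simp add: lookup_add algebra_simps sc_add_left sum.distrib[symmetric])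
qed

lemma br_zero[simp]: "br 0 z = 0" "br x 0 = 0"
  unfolding br_def by simp_all

lemma br_sum_left: "finite A \<Longrightarrow> br (sum f A) z = (\<Sum>a\<in>A. br (f a) z)"
  by (induction A rule: finite_induct) (simp_all add: br_add_left)
lemma br_sum_right: "finite A \<Longrightarrow> br x (sum f A) = (\<Sum>a\<in>A. br x (f a))"
  by (induction A rule: finite_induct) (simp_all add: br_add_right)

lemma keys_scD: "Poly_Mapping.keys (sc a (D s)) \<subseteq> {s}"
  by (auto simp: in_keys_iff D_def lookup_single)

lemma br_basis: "br (sc a (D s)) (sc b (D m)) = sc (a*b) (brD s m)"
  by (subst br_sup[OF _ _ keys_scD keys_scD]) (simp_all add: D_def)


definition P :: "complex poly \<Rightarrow> LA" where
  "P p = (\<Sum>i\<le>degree p. sc (coeff p i) (D (int i - 1)))"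

lemma lookup_P: "Poly_Mapping.lookup (P p) k = (if k \<ge> -1 then coeff p (nat (k+1)) else 0)"
proof -
  have "Poly_Mapping.lookup (P p) k = (\<Sum>i\<le>degree p. coeff p i * (if i = nat (k+1) \<and> k \<ge> -1 then 1 else 0))"
    unfolding P_def lookup_sum by (intro sum.cong refl) (auto simp: D_def lookup_single when_def)
  also have "\<dots> = (if k \<ge> -1 then coeff p (nat (k+1)) else 0)"
    by (auto simp: if_distrib coeff_eq_0 cong: if_cong)
  finally show ?thesis .
qed

lemma P_add: "P (p + q) = P p + P q"
  by (rule poly_mapping_eqI) (simp add: lookup_P lookup_add)
lemma P_diff: "P (p - q) = P p - P q"
  by (rule poly_mapping_eqI) (simp add: lookup_P lookup_minus)
lemma P_smult: "P (smult c p) = sc c (P p)"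
  by (rule poly_mapping_eqI) (simp add: lookup_P)
lemma P_zero[simp]: "P 0 = 0"
  by (rule poly_mapping_eqI) (simp add: lookup_P)
lemma P_monom: "P (monom a i) = sc a (D (int i - 1))"
  by (rule poly_mapping_eqI) (auto simp: lookup_P D_def lookup_single when_def coeff_monom)
lemma P_sum: "finite A \<Longrightarrow> P (sum f A) = (\<Sum>a\<in>A. P (f a))"
  by (induction A rule: finite_induct) (simp_all add: P_add)

definition Wp :: "complex poly \<Rightarrow> complex poly \<Rightarrow> complex poly" where
  "Wp p q = p * pderiv q - pderiv p * q - smult (poly p 1) (monom 1 1 * pderiv q - q)
     + smult (poly q 1) (monom 1 1 * pderiv p - p)"

lemma Wp_add_left: "Wp (p + p') q = Wp p q + Wp p' q"
  unfolding Wp_def by (simp add: pderiv_add algebra_simps smult_add_left smult_add_right smult_diff_right)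
lemma Wp_add_right: "Wp p (q + q') = Wp p q + Wp p q'"
  unfolding Wp_def by (simp add: pderiv_add algebra_simps smult_add_left smult_add_right smult_diff_right)
lemma Wp_zero[simp]: "Wp 0 q = 0" "Wp p 0 = 0"
  unfolding Wp_def by simp_all
lemma Wp_sum_left: "finite A \<Longrightarrow> Wp (sum f A) q = (\<Sum>a\<in>A. Wp (f a) q)"
  by (induction A rule: finite_induct) (simp_all add: Wp_add_left)
lemma Wp_sum_right: "finite A \<Longrightarrow> Wp p (sum f A) = (\<Sum>a\<in>A. Wp p (f a))"
  by (induction A rule: finite_induct) (simp_all add: Wp_add_right)

lemma Wp_monom: "P (Wp (monom a i) (monom b j)) = sc (a*b) (brD (int i - 1) (int j - 1))"
proof (rule poly_mapping_eqI)
  fix k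
  show "Poly_Mapping.lookup (P (Wp (monom a i) (monom b j))) k =
        Poly_Mapping.lookup (sc (a*b) (brD (int i - 1) (int j - 1))) k"
    unfolding brD_def Wp_def
    by (cases i; cases j)
       (auto simp: lookup_P lookup_add lookup_minus pderiv_monom mult_monom coeff_monom
          D_def lookup_single when_def poly_monom algebra_simps)
qed


lemma br_P: "br (P p) (P q) = P (Wp p q)"
proof -
  let ?mp = "\<lambda>i. monom (coeff p i) i" and ?mq = "\<lambda>j. monom (coeff q j) j"
  have "br (P p) (P q) = br (P (\<Sum>i\<le>degree p. ?mp i)) (P (\<Sum>j\<le>degree q. ?mq j))"
    by (simp only: poly_as_sum_of_monoms)
  also have "\<dots> = (\<Sum>i\<le>degree p. \<Sum>j\<le>degree q. P (Wp (?mp i) (?mq j)))"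
    by (simp add: P_sum br_sum_left br_sum_right P_monom br_basis Wp_monom) (rule sum.swap)
  also have "\<dots> = P (Wp (\<Sum>i\<le>degree p. ?mp i) (\<Sum>j\<le>degree q. ?mq j))"
    by (simp add: P_sum Wp_sum_left Wp_sum_right) (rule sum.swap)
  finally show ?thesis by (simp only: poly_as_sum_of_monoms)
qed

lemma y_P: "y m = P ([:-1,1:] ^ (m+1))"
proof -
  have "[:-1,1:] ^ (m+1) = (monom (1::complex) 1 + [:-1:]) ^ (m+1)"
    by (simp add: monom_altdef)
  also have "\<dots> = (\<Sum>k\<le>m+1. monom ((-1) ^ (m + 1 - k) * of_nat ((m + 1) choose k)) k)"
    unfolding binomial_ring
    by (intro sum.cong refl) (simp add: monom_altdef poly_const_pow of_nat_poly mult_ac)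
  finally have eq: "[:-1,1:] ^ (m+1) = (\<Sum>k\<le>m+1. monom ((-1) ^ (m + 1 - k) * (of_nat ((m + 1) choose k) :: complex)) k)" .
  show ?thesis
    unfolding y_def eq P_sum[OF finite_atMost] P_monom atLeast0AtMost ..
qed

lemma Wp_a:
  fixes L :: "complex poly"
  assumes "pderiv L = 1" "poly L 1 = 0" "monom 1 1 = L + 1"
  shows "Wp 1 (L ^ (m+1)) = smult (- of_nat m) (L ^ (m+1))"
proof -
  have d: "pderiv (L^(m+1)) = smult (of_nat (m+1)) (L^m)"
    using pderiv_power_Suc[of L m] assms(1) by simp
  show ?thesis
    unfolding Wp_def assms(3) d
    by (simp add: assms(1,2) poly_power algebra_simps smult_add_left smult_add_right)
qed

lemma Wp_b:
  fixes L :: "complex poly"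
  assumes "pderiv L = 1" "poly L 1 = 0"
  shows "Wp (L ^ (k+1)) (L ^ (m+1)) = smult (of_int (int m - int k)) (L ^ (m + k + 1))"
proof -
  have h1: "L^m * L^Suc k = L^Suc(k+m)" "L^k * L^Suc m = L^Suc(k+m)"
    by (simp_all add: power_add[symmetric] add.commute)
  show ?thesis
    unfolding Wp_def
    by (simp add: pderiv_power_Suc assms poly_power algebra_simps smult_add_left smult_add_right
         smult_diff_left h1 del: power_Suc)
qed

theorem lemma4:
  shows "(\<forall>m::nat. br (D (-1)) (y m) = sc (- of_nat m) (y m))
       \<and> (\<forall>k m::nat. br (y k) (y m) = sc (of_int (int m - int k)) (y (m + k)))"
proof (intro conjI allI)
  fix m :: nat
  let ?L = "[:-1,1:] :: complex poly"
  have D1: "D (-1) = P 1"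
    using P_monom[of 1 0] by (simp add: monom_altdef one_pCons)
  have X: "monom 1 1 = ?L + 1" by (simp add: monom_altdef one_pCons)
  have dL: "pderiv ?L = 1" by (simp add: pderiv_pCons one_pCons)
  have "Wp 1 (?L ^ (m+1)) = smult (- of_nat m) (?L ^ (m+1))"
    by (rule Wp_a[OF dL _ X]) simp
  then show "br (D (-1)) (y m) = sc (- of_nat m) (y m)"
    by (simp only: D1 y_P br_P P_smult)
next
  fix k m :: nat
  let ?L = "[:-1,1:] :: complex poly"
  have dL: "pderiv ?L = 1" by (simp add: pderiv_pCons one_pCons)
  have "Wp (?L ^ (k+1)) (?L ^ (m+1)) = smult (of_int (int m - int k)) (?L ^ (m + k + 1))"
    by (rule Wp_b[OF dL]) simp
  then show "br (y k) (y m) = sc (of_int (int m - int k)) (y (m + k))"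
    by (simp only: y_P br_P P_smult)
qed

end
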